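(* Let $(X,p)$ be a metric space, $(Y,d)$ a complete separable metric space, and $F: X \Rightarrow Y$ a multi-valued function. Let $\overline{F}: X \Rightarrow Y$ be given by $\overline{F}(x) = $ the closure of $F(x)$, viewed also as a map $X \to \mathcal{F}(Y)$. Then: (1) $F$ is strongly continuous at $x\in X$ if and only if $\overline F$ is strongly continuous at $x$, if and only if $\overline F: X \to \mathcal{F}(Y)$ is continuous at $x$ with respect to the lower Fell topology on $\mathcal{F}(Y)$. In particular, if $\overline F: X \to \mathcal{F}(Y)$ is continuous at $x$ with respect to the Fell topology, then $F$ is strongly continuous at $x$. (2) Let $\mathcal{T}$ be a Polish topology on $\mathcal{F}(Y)$ whose Borel sets are exactly the sets of the Effros Borel $\sigma$-algebra. If $F$ is strongly continuous at every $x \in X$, then $\overline F: X \to (\mathcal{F}(Y),\mathcal{T})$ is Borel measurable (with $X$ carrying its Borel $\sigma$-algebra). (3) If the graph of $F$ is a closed subset of $X \times Y$ and $F$ is strongly continuous at $x \in X$, then $F: X \to \mathcal{F}(Y)$ is continuous at $x$ with respect to the Fell topology. (4) If the graph of $F$ is a closed subset of $X\times Y$, then $F$ is strongly continuous at $x \in X$ if and only if $F: X\to\mathcal{F}(Y)$ is continuous at $x$ with respect to the Fell topology.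
   Context: A multi-valued function $F: X \Rightarrow Y$ assigns to each $x$ a nonempty set $F(x)\subseteq Y$; its graph is $\{(x,y): y\in F(x)\}$. $F$ is strongly continuous at $x$ if for every $y \in F(x)$ and every $\varepsilon>0$ there is $\delta>0$ such that for every $x' \in B_p(x,\delta)$ there is $y' \in F(x')$ with $d(y,y')<\varepsilon$. $\mathcal{F}(Y)$ is the family of closed subsets of $Y$. The lower Fell topology on $\mathcal{F}(Y)$ is generated by the sets $\mathcal{A}_U = \{C \in \mathcal{F}(Y): C\cap U \neq\emptyset\}$ for $U\subseteq Y$ open; the Effros Borel $\sigma$-algebra is the $\sigma$-algebra generated by these sets $\mathcal{A}_U$. The Fell topology has as basis the sets $\{C\in\mathcal{F}(Y): C\cap K=\emptyset \text{ and } C\cap U_i\neq\emptyset \text{ for all } i\le n\}$ with $K\subseteq Y$ compact and $U_1,\dots,U_n\subseteq Y$ open. *)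

theory Defs
  imports "HOL-Analysis.Analysis"
begin

text \<open>Multi-valued functions F : X => Y are modelled as F :: 'a => 'b set,
  nonemptiness of values being an explicit hypothesis.\<close>

definition strongly_continuous_at :: "('a::metric_space \<Rightarrow> 'b::metric_space set) \<Rightarrow> 'a \<Rightarrow> bool" where
  "strongly_continuous_at F x \<longleftrightarrow>
     (\<forall>y\<in>F x. \<forall>\<epsilon>>0. \<exists>\<delta>>0. \<forall>x'. dist x x' < \<delta> \<longrightarrow> (\<exists>y'\<in>F x'. dist y y' < \<epsilon>))"

definition closed_sets :: "'b::topological_space set set" where
  "closed_sets = {C. closed C}"

definition hit_set :: "'b::topological_space set \<Rightarrow> 'b set set" where
  "hit_set U = {C \<in> closed_sets. C \<inter> U \<noteq> {}}"

definition miss_set :: "'b::topological_space set \<Rightarrow> 'b set set" where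
  "miss_set K = {C \<in> closed_sets. C \<inter> K = {}}"

definition lower_fell_topology :: "'b::topological_space set topology" where
  "lower_fell_topology =
     subtopology (topology_generated_by {hit_set U | U. open U}) closed_sets"

definition fell_topology :: "'b::topological_space set topology" where
  "fell_topology =
     subtopology (topology_generated_by
        ({hit_set U | U. open U} \<union> {miss_set K | K. compact K})) closed_sets"

definition effros_sets :: "'b::topological_space set set set" where
  "effros_sets = sigma_sets closed_sets {hit_set U | U. open U}"

definition polish_topology :: "'c topology \<Rightarrow> bool" where
  "polish_topology T \<longleftrightarrow> completely_metrizable_space T \<and> separable_space T"

definition borel_of :: "'c topology \<Rightarrow> 'c measure" where
  "borel_of T = sigma (topspace T) {U. openin T U}"

definition continuous_at_top :: "'c topology \<Rightarrow> ('a::metric_space \<Rightarrow> 'c) \<Rightarrow> 'a \<Rightarrow> bool" where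
  "continuous_at_top T g x \<longleftrightarrow> limitin T g (g x) (at x)"

end

theory Submission
  imports Defs
begin

lemma gen_eventually:
  assumes "generate_topology_on B V" "l \<in> V"
    and "\<And>W. W \<in> B \<Longrightarrow> l \<in> W \<Longrightarrow> eventually (\<lambda>x'. g x' \<in> W) F"
  shows "eventually (\<lambda>x'. g x' \<in> V) F"
  using assms(1,2)
proof induction
  case Empty then show ?case by simp
next
  case (Int a b)
  then have "eventually (\<lambda>x'. g x' \<in> a \<and> g x' \<in> b) F"
    by (intro eventually_conj) auto
  then show ?case by (rule eventually_mono) auto
next
  case (UN K)
  then obtain k where k: "k \<in> K" "l \<in> k" by auto
  with UN have "eventually (\<lambda>x'. g x' \<in> k) F" by auto
  then show ?case by (rule eventually_mono) (use k in auto)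
next
  case (Basis s) then show ?case using assms(3) by auto
qed

lemma lim_gen:
  assumes "l \<in> \<Union>B" "l \<in> S" "\<And>x'. g x' \<in> S"
    and "\<And>W. W \<in> B \<Longrightarrow> l \<in> W \<Longrightarrow> eventually (\<lambda>x'. g x' \<in> W) F"
  shows "limitin (subtopology (topology_generated_by B) S) g l F"
  unfolding limitin_def
proof (intro conjI allI impI)
  show "l \<in> topspace (subtopology (topology_generated_by B) S)"
    using assms by simp
next
  fix U assume U: "openin (subtopology (topology_generated_by B) S) U \<and> l \<in> U"
  then obtain V where V: "generate_topology_on B V" "U = V \<inter> S"
    by (auto simp: openin_subtopology openin_topology_generated_by_iff)
  have "eventually (\<lambda>x'. g x' \<in> V) F"
    using gen_eventually[OF V(1), of l g F] U V assms(4) by auto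
  then show "eventually (\<lambda>x'. g x' \<in> U) F"
    by (rule eventually_mono) (use V assms(3) in auto)
qed

lemma lim_gen_conv:
  assumes "limitin (subtopology (topology_generated_by B) S) g l F" "W \<in> B" "l \<in> W"
  shows "eventually (\<lambda>x'. g x' \<in> W) F"
proof -
  have "openin (subtopology (topology_generated_by B) S) (W \<inter> S)"
    using assms(2) topology_generated_by_Basis unfolding openin_subtopology by blast
  moreover have "l \<in> S" using assms(1) by (simp add: limitin_def)
  ultimately have "eventually (\<lambda>x'. g x' \<in> W \<inter> S) F"
    using assms(1,3) unfolding limitin_def by auto
  then show ?thesis by (rule eventually_mono) auto
qed

definition LSC :: "('a::metric_space \<Rightarrow> 'b::metric_space set) \<Rightarrow> 'a \<Rightarrow> bool" where
  "LSC G x \<longleftrightarrow> (\<forall>U. open U \<and> G x \<inter> U \<noteq> {} \<longrightarrow> eventually (\<lambda>x'. G x' \<inter> U \<noteq> {}) (at x))"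

lemma sc_LSC: "strongly_continuous_at G x \<longleftrightarrow> LSC G x"
proof
  assume sc: "strongly_continuous_at G x"
  show "LSC G x" unfolding LSC_def
  proof (intro allI impI)
    fix U assume U: "open U \<and> G x \<inter> U \<noteq> {}"
    then obtain y where y: "y \<in> G x" "y \<in> U" by auto
    then obtain e where e: "e > 0" "ball y e \<subseteq> U" using U open_contains_ball by blast
    obtain d where d: "d > 0" "\<forall>x'. dist x x' < d \<longrightarrow> (\<exists>y'\<in>G x'. dist y y' < e)"
      using sc y e unfolding strongly_continuous_at_def by blast
    show "eventually (\<lambda>x'. G x' \<inter> U \<noteq> {}) (at x)"
      unfolding eventually_at
    proof (intro exI[of _ d] conjI ballI impI)
      fix x' assume "x' \<noteq> x \<and> dist x' x < d"
      then obtain y' where "y' \<in> G x'" "dist y y' < e" using d by (auto simp: dist_commute)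
      then show "G x' \<inter> U \<noteq> {}" using e by auto
    qed (use d in auto)
  qed
next
  assume L: "LSC G x"
  show "strongly_continuous_at G x" unfolding strongly_continuous_at_def
  proof (intro ballI allI impI)
    fix y e assume y: "y \<in> G x" and e: "(e::real) > 0"
    have "eventually (\<lambda>x'. G x' \<inter> ball y e \<noteq> {}) (at x)"
      using L y e centre_in_ball[of y e] unfolding LSC_def by blast
    then obtain d where d: "d > 0" "\<forall>x'. x' \<noteq> x \<and> dist x' x < d \<longrightarrow> G x' \<inter> ball y e \<noteq> {}"
      unfolding eventually_at by auto
    show "\<exists>d>0. \<forall>x'. dist x x' < d \<longrightarrow> (\<exists>y'\<in>G x'. dist y y' < e)"
    proof (intro exI[of _ d] conjI allI impI)
      fix x' assume x': "dist x x' < d"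
      show "\<exists>y'\<in>G x'. dist y y' < e"
      proof (cases "x' = x")
        case True then show ?thesis using y e by (intro bexI[of _ y]) auto
      next
        case False then show ?thesis using d x' by (auto simp: dist_commute)
      qed
    qed (use d in auto)
  qed
qed

lemma LSC_closure: "LSC (\<lambda>x. closure (G x)) x \<longleftrightarrow> LSC G x"
proof -
  have "\<And>U y. open U \<Longrightarrow> (closure (G y) \<inter> U \<noteq> {}) = (G y \<inter> U \<noteq> {})"
    by (simp add: Int_commute open_Int_closure_eq_empty)
  then show ?thesis unfolding LSC_def by (simp cong: conj_cong)
qed

lemma hit_in: "closed C \<Longrightarrow> C \<in> hit_set U \<longleftrightarrow> C \<inter> U \<noteq> {}"
  by (simp add: hit_set_def closed_sets_def)

lemma LSC_lowerfell:
  assumes cl: "\<And>x'. closed (G x')" and ne: "G x \<noteq> {}"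
  shows "continuous_at_top lower_fell_topology G x \<longleftrightarrow> LSC G x"
proof
  assume "continuous_at_top lower_fell_topology G x"
  then have lim: "limitin (subtopology (topology_generated_by {hit_set U | U. open U}) closed_sets) G (G x) (at x)"
    unfolding continuous_at_top_def lower_fell_topology_def .
  show "LSC G x" unfolding LSC_def
  proof (intro allI impI)
    fix U assume U: "open U \<and> G x \<inter> U \<noteq> {}"
    have "eventually (\<lambda>x'. G x' \<in> hit_set U) (at x)"
      by (rule lim_gen_conv[OF lim]) (use U cl[of x] in \<open>auto simp: hit_set_def closed_sets_def\<close>)
    then show "eventually (\<lambda>x'. G x' \<inter> U \<noteq> {}) (at x)"
      by (rule eventually_mono) (simp add: hit_set_def)
  qed
next
  assume L: "LSC G x"
  show "continuous_at_top lower_fell_topology G x"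
    unfolding continuous_at_top_def lower_fell_topology_def
  proof (rule lim_gen)
    show "G x \<in> \<Union> {hit_set U |U. open U}"
    proof
      show "hit_set UNIV \<in> {hit_set U |U. open U}" by blast
      show "G x \<in> hit_set UNIV" using ne cl[of x] by (simp add: hit_set_def closed_sets_def)
    qed
    show "G x \<in> closed_sets" "\<And>x'. G x' \<in> closed_sets" using cl by (auto simp: closed_sets_def)
    fix W assume "W \<in> {hit_set U |U. open U}" "G x \<in> W"
    then obtain U where U: "W = hit_set U" "open U" "G x \<inter> U \<noteq> {}" by (auto simp: hit_set_def)
    have "eventually (\<lambda>x'. G x' \<inter> U \<noteq> {}) (at x)" using L U unfolding LSC_def by auto
    then show "eventually (\<lambda>x'. G x' \<in> W) (at x)"
      by (rule eventually_mono) (use cl U in \<open>auto simp: hit_set_def closed_sets_def\<close>)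
  qed
qed

lemma fell_LSC:
  assumes cl: "\<And>x'. closed (G x')"
    and lim: "continuous_at_top fell_topology G x"
  shows "LSC G x"
  unfolding LSC_def
proof (intro allI impI)
  fix U assume U: "open U \<and> G x \<inter> U \<noteq> {}"
  have "eventually (\<lambda>x'. G x' \<in> hit_set U) (at x)"
    by (rule lim_gen_conv[OF lim[unfolded continuous_at_top_def fell_topology_def]])
       (use U cl[of x] in \<open>auto simp: hit_set_def closed_sets_def\<close>)
  then show "eventually (\<lambda>x'. G x' \<inter> U \<noteq> {}) (at x)"
    by (rule eventually_mono) (simp add: hit_set_def)
qed

lemma LSC_open:
  assumes "\<And>x. LSC G x" "open U"
  shows "open {x. G x \<inter> U \<noteq> {}}"
proof (subst open_subopen, intro ballI)
  fix x assume x: "x \<in> {x. G x \<inter> U \<noteq> {}}"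
  then have "G x \<inter> U \<noteq> {}" by simp
  then have "eventually (\<lambda>x'. G x' \<inter> U \<noteq> {}) (at x)" using assms unfolding LSC_def by blast
  then obtain S where S: "open S" "x \<in> S" "\<And>y. y\<in>S \<Longrightarrow> y \<noteq> x \<Longrightarrow> G y \<inter> U \<noteq> {}"
    unfolding eventually_at_topological by (metis UNIV_I)
  have "S \<subseteq> {x. G x \<inter> U \<noteq> {}}"
  proof
    fix y assume "y \<in> S" then show "y \<in> {x. G x \<inter> U \<noteq> {}}"
      using S(3)[of y] \<open>G x \<inter> U \<noteq> {}\<close> by (cases "y = x") auto
  qed
  then show "\<exists>T. open T \<and> x \<in> T \<and> T \<subseteq> {x. G x \<inter> U \<noteq> {}}" using S by blast
qed

theorem proposition3p3:
  fixes F :: "'a::metric_space \<Rightarrow> 'b::polish_space set"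
  assumes nonempty: "\<And>x. F x \<noteq> {}"
  shows
    "(\<forall>x. (strongly_continuous_at F x \<longleftrightarrow> strongly_continuous_at (\<lambda>x. closure (F x)) x)
        \<and> (strongly_continuous_at (\<lambda>x. closure (F x)) x
             \<longleftrightarrow> continuous_at_top lower_fell_topology (\<lambda>x. closure (F x)) x)
        \<and> (continuous_at_top fell_topology (\<lambda>x. closure (F x)) x \<longrightarrow> strongly_continuous_at F x))
   \<and> (\<forall>T :: 'b set topology.
        polish_topology T \<and> topspace T = closed_sets \<and> sets (borel_of T) = effros_sets
        \<and> (\<forall>x. strongly_continuous_at F x)
        \<longrightarrow> (\<lambda>x. closure (F x)) \<in> borel \<rightarrow>\<^sub>M borel_of T)
   \<and> (closed {(x, y). y \<in> F x} \<longrightarrow>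
        (\<forall>x. strongly_continuous_at F x \<longrightarrow> continuous_at_top fell_topology F x))
   \<and> (closed {(x, y). y \<in> F x} \<longrightarrow>
        (\<forall>x. strongly_continuous_at F x \<longleftrightarrow> continuous_at_top fell_topology F x))"
proof -
  let ?H = "\<lambda>x. closure (F x)"
  have clH: "\<And>x. closed (?H x)" by simp
  have neH: "\<And>x. ?H x \<noteq> {}" using nonempty by simp
  have P1: "\<forall>x. (strongly_continuous_at F x \<longleftrightarrow> strongly_continuous_at ?H x)
        \<and> (strongly_continuous_at ?H x \<longleftrightarrow> continuous_at_top lower_fell_topology ?H x)
        \<and> (continuous_at_top fell_topology ?H x \<longrightarrow> strongly_continuous_at F x)"
  proof
    fix x
    show "(strongly_continuous_at F x \<longleftrightarrow> strongly_continuous_at ?H x)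
        \<and> (strongly_continuous_at ?H x \<longleftrightarrow> continuous_at_top lower_fell_topology ?H x)
        \<and> (continuous_at_top fell_topology ?H x \<longrightarrow> strongly_continuous_at F x)"
      unfolding sc_LSC[of F x] sc_LSC[of ?H x] LSC_lowerfell[of ?H x, OF clH neH]
      using LSC_closure[of F x] fell_LSC[of ?H x, OF clH] by auto
  qed
  have P2: "\<forall>T :: 'b set topology.
        polish_topology T \<and> topspace T = closed_sets \<and> sets (borel_of T) = effros_sets
        \<and> (\<forall>x. strongly_continuous_at F x)
        \<longrightarrow> ?H \<in> borel \<rightarrow>\<^sub>M borel_of T"
  proof (intro allI impI)
    fix T :: "'b set topology"
    assume A: "polish_topology T \<and> topspace T = closed_sets \<and> sets (borel_of T) = effros_sets
        \<and> (\<forall>x. strongly_continuous_at F x)"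
    let ?G = "{hit_set U | U. open U} :: 'b set set set"
    have GP: "?G \<subseteq> Pow closed_sets" by (auto simp: hit_set_def)
    have "sets (borel_of T) = sets (sigma closed_sets ?G)"
      using A GP by (simp add: effros_sets_def sets_measure_of)
    then have eq: "borel \<rightarrow>\<^sub>M borel_of T = borel \<rightarrow>\<^sub>M sigma closed_sets ?G"
      by (intro measurable_cong_sets) auto
    have L: "\<And>x. LSC F x" using A sc_LSC[of F] by simp
    show "?H \<in> borel \<rightarrow>\<^sub>M borel_of T"
      unfolding eq
    proof (rule measurable_measure_of[OF GP])
      show "?H \<in> space borel \<rightarrow> closed_sets" by (auto simp: closed_sets_def)
      fix W assume "W \<in> ?G"
      then obtain U where U: "W = hit_set U" "open U" by auto
      have "?H -` W \<inter> space borel = {x. F x \<inter> U \<noteq> {}}"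
        using U hit_in[OF clH] open_Int_closure_eq_empty[OF U(2)] by (auto simp: Int_commute)
      moreover have "open {x. F x \<inter> U \<noteq> {}}" by (rule LSC_open[OF L U(2)])
      ultimately show "?H -` W \<inter> space borel \<in> sets borel" by simp
    qed
  qed
  have P3: "closed {(x, y). y \<in> F x} \<longrightarrow>
        (\<forall>x. strongly_continuous_at F x \<longleftrightarrow> continuous_at_top fell_topology F x)"
  proof (intro impI allI)
    fix x
    assume cg: "closed {(x, y). y \<in> F x}"
    have clF: "\<And>x. closed (F x)"
    proof -
      fix x
      have "closed ((\<lambda>y. (x, y)) -` {(x, y). y \<in> F x})"
        by (rule continuous_closed_vimage[OF cg]) (intro continuous_intros)
      then show "closed (F x)" by simp
    qed
    show "strongly_continuous_at F x \<longleftrightarrow> continuous_at_top fell_topology F x"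
    proof
      assume "continuous_at_top fell_topology F x"
      then show "strongly_continuous_at F x" using fell_LSC[of F x, OF clF] sc_LSC[of F x] by simp
    next
      assume "strongly_continuous_at F x"
      then have L: "LSC F x" using sc_LSC[of F x] by simp
      show "continuous_at_top fell_topology F x"
        unfolding continuous_at_top_def fell_topology_def
      proof (rule lim_gen)
        show "F x \<in> \<Union> ({hit_set U |U. open U} \<union> {miss_set K |K. compact K})"
        proof
          show "hit_set UNIV \<in> {hit_set U |U. open U} \<union> {miss_set K |K. compact K}" by blast
          show "F x \<in> hit_set UNIV" using nonempty[of x] clF[of x] by (simp add: hit_set_def closed_sets_def)
        qed
        show "F x \<in> closed_sets" "\<And>x'. F x' \<in> closed_sets" using clF by (auto simp: closed_sets_def)
        fix W assume W: "W \<in> {hit_set U |U. open U} \<union> {miss_set K |K. compact K}" "F x \<in> W"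
        show "eventually (\<lambda>x'. F x' \<in> W) (at x)"
        proof (cases "W \<in> {hit_set U |U. open U}")
          case True
          then obtain U where U: "W = hit_set U" "open U" "F x \<inter> U \<noteq> {}" using W by (auto simp: hit_set_def)
          have "eventually (\<lambda>x'. F x' \<inter> U \<noteq> {}) (at x)" using L U(2,3) unfolding LSC_def by blast
          then show ?thesis
            by (rule eventually_mono) (use clF U in \<open>auto simp: hit_set_def closed_sets_def\<close>)
        next
          case False
          then obtain K where K: "W = miss_set K" "compact K" using W by auto
          then have disj: "F x \<inter> K = {}" using W by (simp add: miss_set_def)
          have "open (- {(x, y). y \<in> F x})" using cg by (rule open_Compl)
          moreover have "{x} \<times> K \<subseteq> - {(x, y). y \<in> F x}" using disj by auto
          ultimately obtain X0 where X0: "x \<in> X0" "open X0" "X0 \<times> K \<subseteq> - {(x, y). y \<in> F x}"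
            using Elementary_Topology.tube_lemma[OF K(2)] by blast
          show ?thesis
            unfolding eventually_at_topological
          proof (intro exI[of _ X0] conjI ballI impI)
            fix x' assume "x' \<in> X0"
            then have "F x' \<inter> K = {}" using X0(3) by blast
            then show "F x' \<in> W" using K clF by (simp add: miss_set_def closed_sets_def)
          qed (use X0 in auto)
        qed
      qed
    qed
  qed
  have P3a: "closed {(x, y). y \<in> F x} \<longrightarrow>
        (\<forall>x. strongly_continuous_at F x \<longrightarrow> continuous_at_top fell_topology F x)"
    using P3 by simp
  show ?thesis by (intro conjI P1 P2 P3a P3)
qed

end
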